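(* Let $M$ be an oriented Legendrian knot mosaic representing a Legendrian knot $\Lambda$. Let $U$ and $D$ be the numbers of upward- and downward-oriented cusps in the diagram depicted by $M$, let $N$ be the number of negative crossings, and let $|M|_{T_5}$ and $|M|_{T_6}$ be the numbers of tiles of $M$ equal to $T_5$ and $T_6$ respectively. If $U\ge D$, then $$2|\operatorname{rot}(\Lambda)|\le 2N+|M|_{T_5}+|M|_{T_6}.$$
   Context: Legendrian knots are taken in the standard contact structure on $\mathbb{R}^3$ and represented by front ($xz$-) projections, which have cusps in place of vertical tangencies and in which the strand of more negative slope is the overstrand at every crossing. For an oriented front diagram with $D$ downward-oriented cusps (cusps traversed moving downward) and $U$ upward-oriented cusps, $\operatorname{rot}=\frac12(D-U)$. Legendrian mosaic tiles: take a square tile whose four edge midpoints are potential connection points. The tiles are $T_0$ (empty); $T_1,T_2,T_3,T_4$ (a single arc joining the midpoints of two adjacent edges, one tile for each of the four pairs of adjacent edges); $T_5,T_6$ (a single straight segment joining the midpoints of two opposite edges, one for each pair); $T_7,T_8$ (two disjoint arcs, each joining midpoints of two adjacent edges, together using all four midpoints); $T_{10}$ (two segments joining opposite edges and crossing once). A Legendrian $n$-mosaic is an $n\times n$ array of these tiles, with the whole array rotated $45^\circ$ counterclockwise so that the strands form a front diagram: after rotation the arc of $T_2$, the arc of $T_4$ and both arcs of $T_8$ each contain a cusp, the arcs of $T_1,T_3,T_7$ contain no cusp, $T_5,T_6$ are straight segments of slope $\pm1$, and in $T_{10}$ the strand of negative slope passes over. The mosaic is suitably connected if connection points agree across every shared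 edge and no connection point lies on the outer boundary; it then depicts a Legendrian link front. An oriented Legendrian knot mosaic is a suitably connected Legendrian mosaic depicting a knot, together with an orientation of that knot. *)

theory Defs
  imports Complex_Main
begin

text \<open>Connection points of an (unrotated) tile: midpoints of the North, East,
South and West edges.  After rotating the whole mosaic 45 degrees
counterclockwise, the N point lies upper-left, E upper-right, S lower-right
and W lower-left.  Grid position (i,j): row i (row 0 on top), column j.\<close>

datatype edge = N | E | S | W

datatype tile = T0 | T1 | T2 | T3 | T4 | T5 | T6 | T7 | T8 | T10

text \<open>After rotation: arc N-W has a cusp at the left vertex, arc E-S a cusp at the
right vertex; arcs N-E and S-W are smooth (top/bottom); N-S has slope -1 and
E-W slope +1; in T10 the N-S (negative slope) strand is the overstrand.\<close>

fun arcs :: "tile \<Rightarrow> edge set set" where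
  "arcs T0 = {}"
| "arcs T1 = {{N, E}}"
| "arcs T2 = {{N, W}}"
| "arcs T3 = {{S, W}}"
| "arcs T4 = {{E, S}}"
| "arcs T5 = {{N, S}}"
| "arcs T6 = {{E, W}}"
| "arcs T7 = {{N, E}, {S, W}}"
| "arcs T8 = {{N, W}, {E, S}}"
| "arcs T10 = {{N, S}, {E, W}}"

definition conn :: "tile \<Rightarrow> edge set" where
  "conn t = \<Union> (arcs t)"

fun opp :: "edge \<Rightarrow> edge" where
  "opp N = S" | "opp S = N" | "opp E = W" | "opp W = E"

fun nbr :: "nat \<times> nat \<Rightarrow> edge \<Rightarrow> nat \<times> nat" where
  "nbr (i, j) N = (i - 1, j)"
| "nbr (i, j) S = (i + 1, j)"
| "nbr (i, j) E = (i, j + 1)"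
| "nbr (i, j) W = (i, j - 1)"

type_synonym mosaic = "nat \<times> nat \<Rightarrow> tile"

definition grid :: "nat \<Rightarrow> (nat \<times> nat) set" where
  "grid n = {(i, j). i < n \<and> j < n}"

definition suitably_connected :: "nat \<Rightarrow> mosaic \<Rightarrow> bool" where
  "suitably_connected n M \<longleftrightarrow>
    (\<forall>i<n. \<forall>j<n.
       (E \<in> conn (M (i, j)) \<longleftrightarrow> (j + 1 < n \<and> W \<in> conn (M (i, j + 1)))) \<and>
       (S \<in> conn (M (i, j)) \<longleftrightarrow> (i + 1 < n \<and> N \<in> conn (M (i + 1, j)))) \<and>
       (N \<in> conn (M (i, j)) \<longrightarrow> 0 < i) \<and>
       (W \<in> conn (M (i, j)) \<longrightarrow> 0 < j))"

definition arcs_of :: "nat \<Rightarrow> mosaic \<Rightarrow> ((nat \<times> nat) \<times> edge set) set" where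
  "arcs_of n M = {(p, A). p \<in> grid n \<and> A \<in> arcs (M p)}"

text \<open>A traversal step: (tile position, entry point, exit point).\<close>
type_synonym step = "(nat \<times> nat) \<times> edge \<times> edge"

definition step_arc :: "step \<Rightarrow> (nat \<times> nat) \<times> edge set" where
  "step_arc st = (fst st, {fst (snd st), snd (snd st)})"

text \<open>Such a traversal exists iff the depicted link is a knot, and it records an
orientation of that knot.\<close>
definition oriented_knot_mosaic :: "nat \<Rightarrow> mosaic \<Rightarrow> step list \<Rightarrow> bool" where
  "oriented_knot_mosaic n M w \<longleftrightarrow>
    suitably_connected n M \<and> w \<noteq> [] \<and>
    bij_betw (\<lambda>k. step_arc (w ! k)) {..<length w} (arcs_of n M) \<and>
    (\<forall>k<length w.
       fst (w ! ((k + 1) mod length w)) = nbr (fst (w ! k)) (snd (snd (w ! k))) \<and>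
       fst (snd (w ! ((k + 1) mod length w))) = opp (snd (snd (w ! k))))"

text \<open>Downward-oriented cusps: N to W (left cusp, moving down) and E to S
(right cusp, moving down).  Upward-oriented: W to N and S to E.\<close>
definition down_cusps :: "step list \<Rightarrow> nat" where
  "down_cusps w = card {k. k < length w \<and> snd (w ! k) \<in> {(N, W), (E, S)}}"

definition up_cusps :: "step list \<Rightarrow> nat" where
  "up_cusps w = card {k. k < length w \<and> snd (w ! k) \<in> {(W, N), (S, E)}}"

definition rot :: "step list \<Rightarrow> real" where
  "rot w = (real (down_cusps w) - real (up_cusps w)) / 2"

text \<open>After rotation the over strand (N-S) has
direction (1,-1) when traversed N to S and (-1,1) when traversed S to N; the
under strand (E-W) has direction (1,1) when traversed W to E and (-1,-1) when
traversed E to W.  The crossing is positive iff the cross product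
over x under is positive; hence negative iff (N to S and E to W) or
(S to N and W to E).\<close>
definition negative_crossing :: "step list \<Rightarrow> nat \<times> nat \<Rightarrow> bool" where
  "negative_crossing w p \<longleftrightarrow>
     ((p, N, S) \<in> set w \<and> (p, E, W) \<in> set w) \<or>
     ((p, S, N) \<in> set w \<and> (p, W, E) \<in> set w)"

definition neg_crossings :: "nat \<Rightarrow> mosaic \<Rightarrow> step list \<Rightarrow> nat" where
  "neg_crossings n M w = card {p \<in> grid n. M p = T10 \<and> negative_crossing w p}"

definition tile_count :: "nat \<Rightarrow> mosaic \<Rightarrow> tile \<Rightarrow> nat" where
  "tile_count n M t = card {p \<in> grid n. M p = t}"

end

theory Submission
  imports Defs
begin

definition hA :: "edge \<Rightarrow> int" where "hA e = (if e = N \<or> e = E then 1 else 0)"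
definition ht :: "nat \<times> nat \<Rightarrow> int" where "ht p = int (snd p) - int (fst p)"

lemma ind_card: "finite A \<Longrightarrow> (\<Sum>x\<in>A. if P x then 1 else (0::int)) = int (card {x\<in>A. P x})"
  by (simp add: sum.inter_filter[symmetric])

lemma cyc_sum:
  fixes L :: nat
  assumes "L > 0" shows "(\<Sum>k<L. f ((k+1) mod L)) = (\<Sum>k<L. (f k :: int))"
proof -
  obtain m where L: "L = Suc m" using assms by (cases L) auto
  have "(\<Sum>k<Suc m. f ((k+1) mod Suc m)) = (\<Sum>k<m. f ((k+1) mod Suc m)) + f 0"
    by simp
  also have "(\<Sum>k<m. f ((k+1) mod Suc m)) = (\<Sum>k<m. f (Suc k))"
    by (rule sum.cong) auto
  also have "(\<Sum>k<m. f (Suc k)) + f 0 = (\<Sum>k<Suc m. f k)"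
    by (subst sum.lessThan_Suc_shift) simp
  finally show ?thesis using L by simp
qed

lemma step_ident:
  "(if (x,y) \<in> {(W,N),(S,E)} then 1 else 0) - (if (x,y) \<in> {(N,W),(E,S)} then 1 else (0::int))
   = hA y - hA x + ((if (x,y) \<in> {(N,S),(E,W)} then 1 else 0) - (if (x,y) \<in> {(S,N),(W,E)} then 1 else 0))"
  by (cases x; cases y; simp add: hA_def)

lemma sum_fib:
  assumes "finite G" "finite Sx" "\<forall>s\<in>Sx. fst s \<in> G"
  shows "(\<Sum>p\<in>G. if (p,e) \<in> Sx then 1 else (0::int)) = (\<Sum>s\<in>Sx. if snd s = e then 1 else 0)"
proof -
  have "bij_betw (\<lambda>p. (p,e)) {p\<in>G. (p,e)\<in>Sx} {s\<in>Sx. snd s = e}"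
    unfolding bij_betw_def inj_on_def using assms(3) by force
  then have "card {p\<in>G. (p,e)\<in>Sx} = card {s\<in>Sx. snd s = e}" by (rule bij_betw_same_card)
  then show ?thesis using assms by (simp add: ind_card)
qed

theorem lemma2p2:
  fixes n :: nat and M :: mosaic and w :: "step list"
  assumes "oriented_knot_mosaic n M w"
    and "up_cusps w \<ge> down_cusps w"
  shows "2 * \<bar>rot w\<bar> \<le> 2 * real (neg_crossings n M w) + real (tile_count n M T5) + real (tile_count n M T6)"
proof -
  define L where "L = length w"
  define p where "p k = fst (w ! k)" for k
  define x where "x k = fst (snd (w ! k))" for k
  define y where "y k = snd (snd (w ! k))" for k
  have sc: "suitably_connected n M" and wne: "w \<noteq> []"
    and bij: "bij_betw (\<lambda>k. step_arc (w ! k)) {..<L} (arcs_of n M)"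
    and link: "\<forall>k<L. p ((k + 1) mod L) = nbr (p k) (y k) \<and> x ((k + 1) mod L) = opp (y k)"
    using assms(1) unfolding oriented_knot_mosaic_def L_def p_def x_def y_def by auto
  have Lpos: "L > 0" using wne L_def by simp
  have arc: "p k \<in> grid n \<and> {x k, y k} \<in> arcs (M (p k))" if "k < L" for k
  proof -
    have "step_arc (w ! k) \<in> arcs_of n M" using bij that bij_betw_imp_surj_on by blast
    then show ?thesis unfolding step_arc_def arcs_of_def p_def x_def y_def by auto
  qed
  have hstep: "ht (p ((k+1) mod L)) - ht (p k) = 2 * hA (y k) - 1" if "k < L" for k
  proof -
    obtain i j where pk: "p k = (i, j)" by (cases "p k") auto
    have ij: "i < n" "j < n" using arc[OF that] pk by (auto simp: grid_def)
    have yc: "y k \<in> conn (M (i, j))" using arc[OF that] pk unfolding conn_def by auto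
    have g1: "y k = N \<Longrightarrow> 0 < i" and g2: "y k = W \<Longrightarrow> 0 < j"
      using sc ij yc unfolding suitably_connected_def by auto
    show ?thesis using link that pk g1 g2
      by (cases "y k") (auto simp: ht_def hA_def)
  qed
  have s1: "(\<Sum>k<L. ht (p ((k+1) mod L)) - ht (p k)) = 0"
    using cyc_sum[OF Lpos, of "\<lambda>k. ht (p k)"] by (simp add: sum_subtractf)
  have s1': "(\<Sum>k<L. 2 * hA (y k) - 1) = 0"
    using s1 hstep by (metis (no_types, lifting) lessThan_iff sum.cong)
  have s2: "(\<Sum>k<L. hA (x k)) = (\<Sum>k<L. 1 - hA (y k))"
  proof -
    have "(\<Sum>k<L. hA (x k)) = (\<Sum>k<L. hA (x ((k+1) mod L)))"
      using cyc_sum[OF Lpos, of "\<lambda>k. hA (x k)"] by simp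
    also have "\<dots> = (\<Sum>k<L. 1 - hA (y k))"
    proof (rule sum.cong)
      fix k assume "k \<in> {..<L}"
      then have "x ((k+1) mod L) = opp (y k)" using link by auto
      then show "hA (x ((k+1) mod L)) = 1 - hA (y k)" by (cases "y k") (auto simp: hA_def)
    qed simp
    finally show ?thesis .
  qed
  have s3: "(\<Sum>k<L. hA (y k) - hA (x k)) = 0"
    using s1' s2 by (simp add: sum_subtractf sum_distrib_left)
  define sd where "sd s = (if snd s \<in> {(N,S),(E,W)} then 1 else (0::int))" for s :: step
  define su where "su s = (if snd s \<in> {(S,N),(W,E)} then 1 else (0::int))" for s :: step
  have UD: "int (up_cusps w) - int (down_cusps w) = (\<Sum>k<L. sd (w ! k) - su (w ! k))"
  proof -
    have "int (up_cusps w) - int (down_cusps w)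
       = (\<Sum>k<L. (if (x k, y k) \<in> {(W,N),(S,E)} then 1 else 0) - (if (x k, y k) \<in> {(N,W),(E,S)} then 1 else (0::int)))"
      unfolding up_cusps_def down_cusps_def sum_subtractf
      by (simp add: ind_card L_def x_def y_def)
    also have "\<dots> = (\<Sum>k<L. hA (y k) - hA (x k)) + (\<Sum>k<L. sd (w ! k) - su (w ! k))"
      unfolding step_ident sum.distrib[symmetric]
      by (simp add: sd_def su_def x_def y_def)
    finally show ?thesis using s3 by simp
  qed
  have injw: "inj_on (\<lambda>k. w ! k) {..<L}"
    using bij unfolding bij_betw_def inj_on_def by metis
  have setw: "set w = (\<lambda>k. w ! k) ` {..<L}" by (auto simp: L_def set_conv_nth)
  have sumset: "(\<Sum>k<L. sd (w ! k) - su (w ! k)) = (\<Sum>s\<in>set w. sd s - su s)"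
    unfolding setw by (simp add: sum.reindex[OF injw])
  have fstG: "\<forall>s\<in>set w. fst s \<in> grid n"
    using arc unfolding setw p_def by auto
  have finG: "finite (grid n)" unfolding grid_def
    by (rule finite_subset[of _ "{..<n} \<times> {..<n}"]) auto
  define ind where "ind e q = (if (q, e) \<in> set w then 1 else (0::int))" for e q
  have sdsum: "(\<Sum>s\<in>set w. sd s - su s) = (\<Sum>q\<in>grid n. ind (N,S) q + ind (E,W) q - ind (S,N) q - ind (W,E) q)"
  proof -
    have e: "(\<Sum>q\<in>grid n. ind e q) = (\<Sum>s\<in>set w. if snd s = e then 1 else 0)" for e
      unfolding ind_def by (rule sum_fib[OF finG _ fstG]) simp
    have "sd s - su s = (if snd s = (N,S) then 1 else 0) + (if snd s = (E,W) then 1 else 0)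
        - (if snd s = (S,N) then 1 else 0) - (if snd s = (W,E) then 1 else 0)" for s
      unfolding sd_def su_def by auto
    then show ?thesis by (simp add: sum.distrib sum_subtractf e)
  qed
  have exarc: "\<exists>a b. (q, a, b) \<in> set w \<and> {a, b} = A" if "q \<in> grid n" "A \<in> arcs (M q)" for q A
  proof -
    have "(q, A) \<in> arcs_of n M" using that unfolding arcs_of_def by auto
    then obtain k where "k < L" "step_arc (w ! k) = (q, A)" using bij unfolding bij_betw_def by force
    then show ?thesis unfolding step_arc_def setw
      by (intro exI[of _ "fst (snd (w ! k))"] exI[of _ "snd (snd (w ! k))"])
         (auto intro!: image_eqI[of _ _ k] simp: prod_eq_iff)
  qed
  have inarc: "{a, b} \<in> arcs (M q)" if qin: "(q, a, b) \<in> set w" for q a b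
  proof -
    obtain k where k: "k < L" "w ! k = (q, a, b)" using qin unfolding setw by auto
    show ?thesis using arc[OF k(1)] k(2) unfolding p_def x_def y_def by simp
  qed
  have pw: "ind (N,S) q + ind (E,W) q - ind (S,N) q - ind (W,E) q
      \<le> (if M q = T5 then 1 else 0) + (if M q = T6 then 1 else 0)
         + 2 * (if M q = T10 \<and> negative_crossing w q then 1 else 0)" if qg: "q \<in> grid n" for q
  proof -
    have nNS: "{N,S} \<notin> arcs (M q) \<Longrightarrow> ind (N,S) q = 0 \<and> ind (S,N) q = 0"
      unfolding ind_def using inarc[of q N S] inarc[of q S N] by (auto simp: insert_commute)
    have nEW: "{E,W} \<notin> arcs (M q) \<Longrightarrow> ind (E,W) q = 0 \<and> ind (W,E) q = 0"
      unfolding ind_def using inarc[of q E W] inarc[of q W E] by (auto simp: insert_commute)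
    have b: "ind e q \<le> 1" "ind e q \<ge> 0" for e unfolding ind_def by auto
    show ?thesis
    proof (cases "M q")
      case T10
      obtain a b where ab: "(q,a,b) \<in> set w" "{a,b} = {N,S}" using exarc[OF qg, of "{N,S}"] T10 by auto
      obtain c d where cd: "(q,c,d) \<in> set w" "{c,d} = {E,W}" using exarc[OF qg, of "{E,W}"] T10 by auto
      have ab': "(a,b) = (N,S) \<or> (a,b) = (S,N)" using ab(2) by (auto simp: doubleton_eq_iff)
      have cd': "(c,d) = (E,W) \<or> (c,d) = (W,E)" using cd(2) by (auto simp: doubleton_eq_iff)
      show ?thesis using ab(1) cd(1) ab' cd' T10 unfolding ind_def negative_crossing_def by auto
    qed (use nNS nEW b[of "(N,S)"] b[of "(S,N)"] b[of "(E,W)"] b[of "(W,E)"] in \<open>auto simp: doubleton_eq_iff\<close>)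
  qed
  have rhs: "(\<Sum>q\<in>grid n. (if M q = T5 then 1 else 0) + (if M q = T6 then 1 else 0)
         + 2 * (if M q = T10 \<and> negative_crossing w q then 1 else (0::int)))
       = 2 * int (neg_crossings n M w) + int (tile_count n M T5) + int (tile_count n M T6)"
    unfolding neg_crossings_def tile_count_def sum.distrib sum_distrib_left[symmetric]
    by (simp add: ind_card[OF finG])
  have main: "int (up_cusps w) - int (down_cusps w)
      \<le> 2 * int (neg_crossings n M w) + int (tile_count n M T5) + int (tile_count n M T6)"
    unfolding UD sumset sdsum rhs[symmetric] by (rule sum_mono) (rule pw)
  have "real_of_int (int (up_cusps w) - int (down_cusps w))
      \<le> real_of_int (2 * int (neg_crossings n M w) + int (tile_count n M T5) + int (tile_count n M T6))"
    using main by (simp only: of_int_le_iff)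
  then have m: "real (up_cusps w) - real (down_cusps w)
      \<le> 2 * real (neg_crossings n M w) + real (tile_count n M T5) + real (tile_count n M T6)" by simp
  have "2 * \<bar>rot w\<bar> = real (up_cusps w) - real (down_cusps w)"
    using assms(2) unfolding rot_def by (simp add: abs_if field_simps)
  then show ?thesis using m by simp
qed

end
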